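(* Under the standing assumptions below: (i) if $e\in S$, $f\in S_2$ and $ef=f$, then $e\in S_2$; (ii) $S_1\cdot S_1\subseteq S_1\cup S_0$.
   Context: Standing assumptions: $S$ is a semilattice (commutative semigroup of idempotents), $0\le\delta<0.03$, and $\theta:S\to M_2(\mathbb C)$ satisfies $\|\theta(e)\theta(f)-\theta(ef)\|_{HS}\le\delta$ for all $e,f\in S$, where $\|A\|_{HS}=(\operatorname{tr}(A^*A))^{1/2}$. For $k\in\{0,1,2\}$, $S_k=\{x\in S:\ |\operatorname{tr}\theta(x)-k|<0.95\}$; these sets are pairwise disjoint and cover $S$. *)

theory Defs
  imports "HOL-Analysis.Analysis"
begin

definition mtrace :: "complex^2^2 \<Rightarrow> complex" where
  "mtrace A = (\<Sum>i\<in>UNIV. A $ i $ i)"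

text \<open>Hilbert-Schmidt (Frobenius) norm: sqrt(tr(A^* A)) = sqrt(sum of |a_ij|^2).\<close>
definition hs_norm :: "complex^2^2 \<Rightarrow> real" where
  "hs_norm A = sqrt (\<Sum>i\<in>UNIV. \<Sum>j\<in>UNIV. (cmod (A $ i $ j))\<^sup>2)"

definition Slev :: "('a \<Rightarrow> complex^2^2) \<Rightarrow> nat \<Rightarrow> 'a set" where
  "Slev \<theta> k = {x. cmod (mtrace (\<theta> x) - of_nat k) < 0.95}"

end

theory Submission
  imports Defs
begin


lemma hs_sq: "(hs_norm A)^2 = cmod (A$1$1)^2 + cmod (A$1$2)^2 + cmod (A$2$1)^2 + cmod (A$2$2)^2"
  unfolding hs_norm_def sum_2 by simp

lemma tr2: "mtrace A = A$1$1 + A$2$2" unfolding mtrace_def sum_2 by simp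

lemma mult_entry: "((A::complex^2^2) ** B) $ i $ j = A$i$1 * B$1$j + A$i$2 * B$2$j"
  by (simp add: matrix_matrix_mult_def sum_2)

lemma entry_le: "cmod (A$i$j) \<le> hs_norm A"
proof -
  have "cmod (A$i$j)^2 \<le> (hs_norm A)^2" unfolding hs_sq
    using exhaust_2[of i] exhaust_2[of j] by auto
  thus ?thesis by (rule power2_le_imp_le) (simp add: hs_norm_def sum_nonneg)
qed

lemma paral: "cmod (a+b)^2 + cmod (a-b)^2 = 2*(cmod a^2 + cmod b^2)"
  by (simp only: cmod_power2) (simp add: power2_eq_square algebra_simps)

lemma sq4: "4 * (x * y) \<le> 2 * x^2 + 2 * (y::real)^2"
proof - have "0 \<le> (x-y)^2" by simp thus ?thesis by (simp add: power2_eq_square algebra_simps) qed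

lemma alg1: "(a + b)^2 - 4 * (a * b - c * d) = (a - b)^2 + 4 * (c * (d::complex))"
  by (simp add: power2_eq_square algebra_simps)

lemma schur:
  fixes M :: "complex^2^2"
  assumes "u + v = M$1$1 + M$2$2" "u * v = M$1$1*M$2$2 - M$1$2*M$2$1"
  shows "cmod u ^2 + cmod v ^2 \<le> (hs_norm M)^2"
proof -
  have e: "(u - v)^2 = (M$1$1 - M$2$2)^2 + 4 * (M$1$2 * M$2$1)"
  proof -
    have "(u - v)^2 = (u + v)^2 - 4 * (u * v)" by (simp add: power2_eq_square algebra_simps)
    also have "\<dots> = (M$1$1 + M$2$2)^2 - 4 * (M$1$1*M$2$2 - M$1$2*M$2$1)" by (simp only: assms)
    also have "\<dots> = (M$1$1 - M$2$2)^2 + 4 * (M$1$2 * M$2$1)" by (rule alg1)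
    finally show ?thesis .
  qed
  have "cmod (u - v)^2 = cmod ((u - v)^2)" by (simp add: norm_power)
  also have "\<dots> \<le> cmod ((M$1$1 - M$2$2)^2) + cmod (4 * (M$1$2 * M$2$1))"
    unfolding e by (rule norm_triangle_ineq)
  also have "\<dots> = cmod (M$1$1 - M$2$2)^2 + 4 * (cmod (M$1$2) * cmod (M$2$1))"
    by (simp add: norm_power norm_mult)
  also have "\<dots> \<le> cmod (M$1$1 - M$2$2)^2 + 2 * cmod (M$1$2)^2 + 2* cmod (M$2$1)^2"
    using sq4[of "cmod (M$1$2)" "cmod (M$2$1)"] by linarith
  finally have h: "cmod (u - v)^2 \<le> cmod (M$1$1 - M$2$2)^2 + 2 * cmod (M$1$2)^2 + 2* cmod (M$2$1)^2" .
  have "2*(cmod u^2 + cmod v^2) = cmod (u + v)^2 + cmod (u - v)^2" using paral by simp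
  also have "\<dots> \<le> cmod (M$1$1 + M$2$2)^2 + cmod (M$1$1 - M$2$2)^2 + 2 * cmod (M$1$2)^2 + 2* cmod (M$2$1)^2"
    using h assms(1) by simp
  also have "\<dots> = 2 * (hs_norm M)^2" unfolding hs_sq paral[of "M$1$1" "M$2$2"] by simp
  finally show ?thesis by simp
qed



lemma eig_exists: "\<exists>l1 l2::complex. l1 + l2 = t \<and> l1 * l2 = d"
proof -
  define s where "s = csqrt (t^2 - 4*d)"
  have s2: "s^2 = t^2 - 4*d" unfolding s_def by simp
  have "(t+s)/2 + (t-s)/2 = t" by (simp add: field_simps)
  moreover have "((t+s)/2) * ((t-s)/2) = d"
  proof -
    have "((t+s)/2) * ((t-s)/2) = (t^2 - s^2)/4" by (simp add: field_simps power2_eq_square)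
    thus ?thesis using s2 by simp
  qed
  ultimately show ?thesis by blast
qed

lemma E_trdet:
  fixes A :: "complex^2^2"
  assumes "l1 + l2 = A$1$1 + A$2$2" "l1 * l2 = A$1$1*A$2$2 - A$1$2*A$2$1"
  defines "E \<equiv> A ** A - A"
  shows "(l1^2 - l1) + (l2^2 - l2) = E$1$1 + E$2$2"
    and "(l1^2 - l1) * (l2^2 - l2) = E$1$1*E$2$2 - E$1$2*E$2$1"
proof -
  have r1: "(l1^2 - l1) + (l2^2 - l2) = (l1+l2)^2 - 2*(l1*l2) - (l1+l2)"
    by (simp add: power2_eq_square algebra_simps)
  have r2: "(l1^2 - l1) * (l2^2 - l2) = (l1*l2) * ((l1*l2) - (l1+l2) + 1)"
    by (simp add: power2_eq_square algebra_simps)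
  show "(l1^2 - l1) + (l2^2 - l2) = E$1$1 + E$2$2"
    unfolding r1 assms(1,2) E_def by (simp add: mult_entry power2_eq_square algebra_simps)
  show "(l1^2 - l1) * (l2^2 - l2) = E$1$1*E$2$2 - E$1$2*E$2$1"
    unfolding r2 assms(1,2) E_def by (simp add: mult_entry power2_eq_square algebra_simps)
qed

lemma single:
  fixes x y m :: real
  assumes "0 \<le> x" "0 \<le> y" "1 \<le> x + y" "x * y = m" "m \<le> (3/100)"
  shows "x \<le> m / (47/50) \<or> y \<le> m / (47/50)"
proof (cases "x \<le> y")
  case True
  hence "y \<ge> 1/2" using assms by linarith
  hence "x * (1/2) \<le> x * y" using mult_left_mono assms(1) by blast
  hence "x \<le> (3/50)" using assms by linarith
  hence "y \<ge> (47/50)" using assms by linarith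
  hence "x * (47/50) \<le> x * y" using mult_left_mono assms(1) by blast
  hence "x * (47/50) \<le> m" using assms by simp
  thus ?thesis by (simp add: field_simps)
next
  case False
  hence "x \<ge> 1/2" using assms by linarith
  hence "(1/2) * y \<le> x * y" using mult_right_mono assms(2) by blast
  hence "y \<le> (3/50)" using assms by linarith
  hence "x \<ge> (47/50)" using assms by linarith
  hence "(47/50) * y \<le> x * y" using mult_right_mono assms(2) by blast
  hence "(47/50) * y \<le> m" using assms by simp
  thus ?thesis by (simp add: field_simps)
qed

lemma single_c:
  fixes l :: complex
  assumes "cmod (l^2 - l) \<le> (3/100)"
  shows "\<exists>n\<in>{0,1::complex}. cmod (l - n) \<le> cmod (l^2 - l) / (47/50)"
proof -
  have f: "cmod (l^2 - l) = cmod l * cmod (l - 1)"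
    by (metis norm_mult power2_eq_square right_diff_distrib mult.right_neutral)
  have "1 \<le> cmod l + cmod (l - 1)"
    using norm_triangle_ineq4[of l "l - 1"] by simp
  from single[OF norm_ge_zero norm_ge_zero this f[symmetric] assms] show ?thesis by auto
qed



lemma quant:
  fixes A :: "complex^2^2"
  assumes "hs_norm (A ** A - A) \<le> \<delta>" "\<delta> < 3/100"
  shows "\<exists>l1 l2 n1 n2. l1 + l2 = A$1$1 + A$2$2 \<and> l1*l2 = A$1$1*A$2$2 - A$1$2*A$2$1
     \<and> n1\<in>{0,1::complex} \<and> n2\<in>{0,1::complex} \<and> cmod (l1 - n1) + cmod (l2 - n2) < 1/20"
proof -
  obtain l1 l2 where L: "l1 + l2 = A$1$1 + A$2$2" "l1*l2 = A$1$1*A$2$2 - A$1$2*A$2$1"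
    using eig_exists by blast
  define E where "E = A ** A - A"
  have s: "cmod (l1^2 - l1)^2 + cmod (l2^2 - l2)^2 \<le> (hs_norm E)^2"
    apply (rule schur)
    using E_trdet[OF L] unfolding E_def by auto
  have h0: "0 \<le> hs_norm E" unfolding hs_norm_def by (simp add: sum_nonneg)
  have hd: "hs_norm E \<le> \<delta>" using assms E_def by simp
  have "(hs_norm E)^2 \<le> \<delta>^2" using h0 hd by (simp add: power_mono)
  also have "\<delta>^2 < (3/100)^2" using h0 hd assms(2) by (simp add: power_strict_mono)
  finally have s2: "cmod (l1^2 - l1)^2 + cmod (l2^2 - l2)^2 < (3/100)^2" using s by linarith
  define m1 where "m1 = cmod (l1^2 - l1)"
  define m2 where "m2 = cmod (l2^2 - l2)"
  have m1p: "0 \<le> m1" "0 \<le> m2" unfolding m1_def m2_def by auto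
  have "m1^2 \<le> (3/100)^2" using s2 zero_le_power2[of m2] unfolding m1_def m2_def by linarith
  hence m1b: "m1 \<le> 3/100" by (rule power2_le_imp_le) simp
  have "m2^2 \<le> (3/100)^2" using s2 zero_le_power2[of m1] unfolding m1_def m2_def by linarith
  hence m2b: "m2 \<le> 3/100" by (rule power2_le_imp_le) simp
  obtain n1 where n1: "n1\<in>{0,1::complex}" "cmod (l1 - n1) \<le> m1 / (47/50)"
    using single_c[of l1] m1b unfolding m1_def by blast
  obtain n2 where n2: "n2\<in>{0,1::complex}" "cmod (l2 - n2) \<le> m2 / (47/50)"
    using single_c[of l2] m2b unfolding m2_def by blast
  define r where "r = cmod (l1 - n1) + cmod (l2 - n2)"
  have r0: "0 \<le> r" unfolding r_def by simp
  have rb: "r \<le> (m1 + m2) * (50/47)" using n1 n2 r_def by (simp add: field_simps)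
  have "(m1+m2)^2 \<le> 2*(m1^2 + m2^2)"
  proof - have "0 \<le> (m1-m2)^2" by simp thus ?thesis by (simp add: power2_eq_square algebra_simps) qed
  also have "\<dots> < 2 * (3/100)^2" using s2 m1_def m2_def by simp
  finally have mm: "(m1+m2)^2 < 18/10000" by (simp add: power2_eq_square)
  have "r^2 \<le> ((m1 + m2) * (50/47))^2" using rb r0 by (simp add: power_mono)
  also have "\<dots> = (m1+m2)^2 * (2500/2209)" by (simp add: power2_eq_square algebra_simps)
  also have "\<dots> < (18/10000) * (2500/2209)" using mm by simp
  also have "\<dots> < (1/20)^2" by (simp add: power2_eq_square)
  finally have "r^2 < (1/20)^2" .
  hence "r < 1/20" by (rule power_less_imp_less_base) simp
  thus ?thesis using L n1(1) n2(1) r_def by blast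
qed



lemma nn_bound: "n1\<in>{0,1::complex} \<Longrightarrow> n2\<in>{0,1::complex} \<Longrightarrow> \<not>(n1 = 1 \<and> n2 = 1) \<Longrightarrow> 1 \<le> cmod (n1 + n2 - 2)"
  by auto

lemma tr_dist: "cmod (n1 + n2 - k) - (cmod (l1 - n1) + cmod (l2 - n2)) \<le> cmod (l1 + l2 - (k::complex))"
proof -
  have "n1 + n2 - k = (l1 + l2 - k) - ((l1 - n1) + (l2 - n2))" by simp
  hence "cmod (n1 + n2 - k) \<le> cmod (l1 + l2 - k) + cmod ((l1 - n1) + (l2 - n2))"
    using norm_triangle_ineq4 by metis
  moreover have "cmod ((l1 - n1) + (l2 - n2)) \<le> cmod (l1 - n1) + cmod (l2 - n2)"
    by (rule norm_triangle_ineq)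
  ultimately have "cmod (n1 + n2 - k) \<le> cmod (l1 + l2 - k) + cmod (l1 - n1) + cmod (l2 - n2)" by linarith
  thus ?thesis by linarith
qed



lemma pm: "cmod x \<le> a \<Longrightarrow> cmod y \<le> b \<Longrightarrow> cmod (x * y) \<le> a * b"
  by (simp add: norm_mult mult_mono' mult_mono)

lemma tri3: "cmod (x + y + z) \<le> cmod x + cmod y + cmod z"
  using norm_triangle_ineq[of "x+y" z] norm_triangle_ineq[of x y] by linarith

lemma tri6: "cmod (x1 + x2 - x3 - x4 + x5 - x6) \<le> cmod x1 + cmod x2 + cmod x3 + cmod x4 + cmod x5 + cmod x6"
proof -
  have "cmod (x1 + x2 - x3 - x4 + x5 - x6) \<le> cmod (x1 + x2 - x3 - x4 + x5) + cmod x6" by (rule norm_triangle_ineq4)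
  moreover have "cmod (x1 + x2 - x3 - x4 + x5) \<le> cmod (x1 + x2 - x3 - x4) + cmod x5" by (rule norm_triangle_ineq)
  moreover have "cmod (x1 + x2 - x3 - x4) \<le> cmod (x1 + x2 - x3) + cmod x4" by (rule norm_triangle_ineq4)
  moreover have "cmod (x1 + x2 - x3) \<le> cmod (x1 + x2) + cmod x3" by (rule norm_triangle_ineq4)
  moreover have "cmod (x1 + x2) \<le> cmod x1 + cmod x2" by (rule norm_triangle_ineq)
  ultimately show ?thesis by linarith
qed

lemma partI:
  fixes A B :: "complex^2^2"
  assumes hA: "hs_norm (A ** A - A) \<le> \<delta>" and hB: "hs_norm (B ** B - B) \<le> \<delta>"
    and hF: "hs_norm (A ** B - B) \<le> \<delta>" and d: "\<delta> < 3/100"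
    and tB: "cmod (mtrace B - 2) < 95/100"
  shows "cmod (mtrace A - 2) < 1/20"
proof -
  obtain l1 l2 n1 n2 where L: "l1 + l2 = B$1$1 + B$2$2" "l1*l2 = B$1$1*B$2$2 - B$1$2*B$2$1"
    "n1\<in>{0,1::complex}" "n2\<in>{0,1::complex}" "cmod (l1 - n1) + cmod (l2 - n2) < 1/20"
    using quant[OF hB d] by blast
  have n11: "n1 = 1 \<and> n2 = 1"
  proof (rule ccontr)
    assume "\<not> (n1 = 1 \<and> n2 = 1)"
    from nn_bound[OF L(3,4) this] tr_dist[of n1 n2 2 l1 l2] L(5)
    have "19/20 < cmod (l1 + l2 - 2)" by linarith
    thus False using tB L(1) tr2[of B] by simp
  qed
  define a where "a = cmod (l1 - 1)"
  define b where "b = cmod (l2 - 1)"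
  have ab: "a + b < 1/20" "0 \<le> a" "0 \<le> b" using L(5) n11 a_def b_def by auto
  define t where "t = B$1$1 + B$2$2"
  define dB where "dB = B$1$1*B$2$2 - B$1$2*B$2$1"
  have "l1 * l2 - 1 = (l1 - 1) * (l2 - 1) + (l1 - 1) + (l2 - 1)" by (simp add: algebra_simps)
  hence "cmod (l1 * l2 - 1) = cmod ((l1 - 1) * (l2 - 1) + (l1 - 1) + (l2 - 1))" by (rule arg_cong)
  also have "\<dots> \<le> a * b + a + b" unfolding a_def b_def
    using tri3[of "(l1 - 1) * (l2 - 1)" "l1 - 1" "l2 - 1"] by (simp add: norm_mult)
  finally have "cmod (l1 * l2 - 1) \<le> a * b + a + b" .
  moreover have "a * b \<le> (1/20) * (1/20)" using ab by (intro mult_mono) auto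
  ultimately have dB1: "cmod (dB - 1) \<le> 21/400" using ab L(2) dB_def by simp
  have dBlo: "379/400 \<le> cmod dB" and dBhi: "cmod dB \<le> 421/400"
    using dB1 norm_triangle_ineq2[of dB 1] norm_triangle_ineq3[of dB 1] by auto
  have "t - 2 = (l1 - 1) + (l2 - 1)" using L(1) t_def by simp
  hence "cmod (t - 2) = cmod ((l1 - 1) + (l2 - 1))" by (rule arg_cong)
  hence "cmod (t - 2) \<le> a + b" unfolding a_def b_def using norm_triangle_ineq[of "l1 - 1" "l2 - 1"] by simp
  moreover have "1 \<le> cmod (t - 1) + cmod (t - 2)"
    using norm_triangle_ineq4[of "t - 1" "t - 2"] by simp
  ultimately have t1: "19/20 \<le> cmod (t - 1)" using ab by linarith
  define E where "E = B ** B - B"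
  have E12: "E$1$2 = (t - 1) * B$1$2" unfolding E_def t_def by (simp add: mult_entry algebra_simps)
  have E21: "E$2$1 = (t - 1) * B$2$1" unfolding E_def t_def by (simp add: mult_entry algebra_simps)
  have E11: "E$1$1 = (t - 1) * B$1$1 - dB" unfolding E_def t_def dB_def by (simp add: mult_entry algebra_simps)
  have E22: "E$2$2 = (t - 1) * B$2$2 - dB" unfolding E_def t_def dB_def by (simp add: mult_entry algebra_simps)
  have Eb: "cmod (E$i$j) \<le> 3/100" for i j using entry_le[of E i j] hB d E_def by simp
  have smallb: "cmod (B$i$j) \<le> 1/30" if "cmod ((t - 1) * B$i$j) \<le> 3/100" for i j
  proof -
    have "(19/20) * cmod (B$i$j) \<le> cmod (t - 1) * cmod (B$i$j)" using mult_right_mono[OF t1 norm_ge_zero] .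
    also have "\<dots> \<le> 3/100" using that by (simp add: norm_mult)
    finally show ?thesis by simp
  qed
  have bigb: "cmod (B$i$j) \<le> 6/5" if "cmod ((t - 1) * B$i$j - dB) \<le> 3/100" for i j
  proof -
    have "cmod ((t - 1) * B$i$j) \<le> cmod ((t - 1) * B$i$j - dB) + cmod dB"
      using norm_triangle_ineq[of "(t - 1) * B$i$j - dB" dB] by simp
    hence "cmod ((t - 1) * B$i$j) \<le> 433/400" using that dBhi by simp
    moreover have "(19/20) * cmod (B$i$j) \<le> cmod (t - 1) * cmod (B$i$j)" using mult_right_mono[OF t1 norm_ge_zero] .
    ultimately show ?thesis by (simp add: norm_mult)
  qed
  have b12: "cmod (B$1$2) \<le> 1/30" using smallb Eb[of 1 2] E12 by simp
  have b21: "cmod (B$2$1) \<le> 1/30" using smallb Eb[of 2 1] E21 by simp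
  have b11: "cmod (B$1$1) \<le> 6/5" using bigb Eb[of 1 1] E11 by simp
  have b22: "cmod (B$2$2) \<le> 6/5" using bigb Eb[of 2 2] E22 by simp
  define F where "F = A ** B - B"
  have Fb: "cmod (F$i$j) \<le> 3/100" for i j using entry_le[of F i j] hF d F_def by simp
  define dA where "dA = A$1$1*A$2$2 - A$1$2*A$2$1"
  have AB: "(A ** B)$i$j = B$i$j + F$i$j" for i j unfolding F_def by simp
  have "dA * dB = det (A ** B)" using det_mul[of A B] det_2[of A] det_2[of B] unfolding dA_def dB_def by simp
  also have "\<dots> = (B$1$1 + F$1$1) * (B$2$2 + F$2$2) - (B$1$2 + F$1$2) * (B$2$1 + F$2$1)"
    unfolding det_2 AB by simp
  finally have "dA * dB - dB = B$1$1*F$2$2 + F$1$1*B$2$2 - B$1$2*F$2$1 - F$1$2*B$2$1 + F$1$1*F$2$2 - F$1$2*F$2$1"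
    unfolding dB_def by (simp add: algebra_simps)
  hence "cmod (dA * dB - dB) \<le> cmod (B$1$1*F$2$2) + cmod (F$1$1*B$2$2) + cmod (B$1$2*F$2$1) + cmod (F$1$2*B$2$1) + cmod (F$1$1*F$2$2) + cmod (F$1$2*F$2$1)"
    by (simp only: tri6)
  also have "\<dots> \<le> (6/5)*(3/100) + (3/100)*(6/5) + (1/30)*(3/100) + (3/100)*(1/30) + (3/100)*(3/100) + (3/100)*(3/100)"
    using pm b11 b22 b12 b21 Fb by (meson add_mono)
  finally have X: "cmod (dB * (dA - 1)) \<le> 2/25" by (simp add: algebra_simps)
  have "(379/400) * cmod (dA - 1) \<le> cmod dB * cmod (dA - 1)" using mult_right_mono[OF dBlo norm_ge_zero] .
  also have "\<dots> \<le> 2/25" using X by (simp add: norm_mult)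
  finally have "cmod (dA - 1) \<le> 1/10" by simp
  hence dAlo: "9/10 \<le> cmod dA" using norm_triangle_ineq2[of 1 dA] norm_minus_commute[of 1 dA] by simp
  obtain k1 k2 m1 m2 where K: "k1 + k2 = A$1$1 + A$2$2" "k1*k2 = A$1$1*A$2$2 - A$1$2*A$2$1"
    "m1\<in>{0,1::complex}" "m2\<in>{0,1::complex}" "cmod (k1 - m1) + cmod (k2 - m2) < 1/20"
    using quant[OF hA d] by blast
  have m11: "m1 = 1 \<and> m2 = 1"
  proof (rule ccontr)
    assume nn: "\<not> (m1 = 1 \<and> m2 = 1)"
    have small: "cmod k1 * cmod k2 < 9/10"
    proof (cases "m1 = 0")
      case True
      hence "cmod k1 + cmod (k2 - m2) < 1/20" using K(5) by simp
      hence "cmod k1 \<le> 1/20" "cmod (k2 - m2) \<le> 1/20" using norm_ge_zero[of k1] norm_ge_zero[of "k2 - m2"] by linarith+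
      moreover have "cmod k2 \<le> cmod (k2 - m2) + cmod m2" using norm_triangle_ineq[of "k2 - m2" m2] by simp
      moreover have "cmod m2 \<le> 1" using K(4) by auto
      ultimately have "cmod k1 * cmod k2 \<le> (1/20) * (21/20)" by (intro mult_mono) auto
      thus ?thesis by simp
    next
      case False
      hence "m2 = 0" using nn K(3,4) by auto
      hence "cmod k2 + cmod (k1 - m1) < 1/20" using K(5) by simp
      hence "cmod k2 \<le> 1/20" "cmod (k1 - m1) \<le> 1/20" using norm_ge_zero[of k2] norm_ge_zero[of "k1 - m1"] by linarith+
      moreover have "cmod k1 \<le> cmod (k1 - m1) + cmod m1" using norm_triangle_ineq[of "k1 - m1" m1] by simp
      moreover have "cmod m1 \<le> 1" using K(3) by auto
      ultimately have "cmod k1 * cmod k2 \<le> (21/20) * (1/20)" by (intro mult_mono) auto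
      thus ?thesis by simp
    qed
    moreover have "cmod dA = cmod k1 * cmod k2" using K(2) dA_def by (simp add: norm_mult[symmetric])
    ultimately show False using dAlo by linarith
  qed
  have "cmod (k1 + k2 - 2) \<le> cmod (k1 - 1) + cmod (k2 - 1)"
    using norm_triangle_ineq[of "k1 - 1" "k2 - 1"] by (simp add: algebra_simps)
  thus ?thesis using K(1,5) m11 tr2[of A] by simp
qed




lemma tr_class:
  fixes A :: "complex^2^2"
  assumes "hs_norm (A ** A - A) \<le> \<delta>" "\<delta> < 3/100"
  shows "\<exists>k\<in>{0,1,2::complex}. cmod (mtrace A - k) < 1/20"
proof -
  obtain l1 l2 n1 n2 where L: "l1 + l2 = A$1$1 + A$2$2"
    "n1\<in>{0,1::complex}" "n2\<in>{0,1::complex}" "cmod (l1 - n1) + cmod (l2 - n2) < 1/20"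
    using quant[OF assms] by blast
  have "mtrace A - (n1 + n2) = (l1 - n1) + (l2 - n2)" using L(1) tr2[of A] by simp
  hence "cmod (mtrace A - (n1 + n2)) = cmod ((l1 - n1) + (l2 - n2))" by (rule arg_cong)
  also have "\<dots> \<le> cmod (l1 - n1) + cmod (l2 - n2)" by (rule norm_triangle_ineq)
  finally have "cmod (mtrace A - (n1 + n2)) < 1/20" using L(4) by linarith
  moreover have "n1 + n2 \<in> {0,1,2}" using L(2,3) by auto
  ultimately show ?thesis by blast
qed

theorem lemmal:
  fixes \<theta> :: "'a::ab_semigroup_mult \<Rightarrow> complex^2^2" and \<delta> :: real
  assumes idem: "\<And>x::'a. x * x = x"
    and delta: "0 \<le> \<delta>" "\<delta> < 0.03"
    and approx: "\<And>e f. hs_norm (\<theta> e ** \<theta> f - \<theta> (e * f)) \<le> \<delta>"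
  shows "(\<forall>e f. f \<in> Slev \<theta> 2 \<and> e * f = f \<longrightarrow> e \<in> Slev \<theta> 2)
         \<and> (\<forall>x\<in>Slev \<theta> 1. \<forall>y\<in>Slev \<theta> 1. x * y \<in> Slev \<theta> 1 \<union> Slev \<theta> 0)"
proof -
  have d: "\<delta> < 3/100" using delta by simp
  have sq: "hs_norm (\<theta> x ** \<theta> x - \<theta> x) \<le> \<delta>" for x using approx[of x x] idem[of x] by simp
  have P1: "cmod (mtrace (\<theta> e) - 2) < 1/20" if "cmod (mtrace (\<theta> f) - 2) < 95/100" "e * f = f" for e f
  proof -
    have "hs_norm (\<theta> e ** \<theta> f - \<theta> f) \<le> \<delta>" using approx[of e f] that(2) by simp
    from partI[OF sq[of e] sq[of f] this d that(1)] show ?thesis .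
  qed
  have S: "x \<in> Slev \<theta> k \<longleftrightarrow> cmod (mtrace (\<theta> x) - of_nat k) < 95/100" for x k
    unfolding Slev_def by simp
  show ?thesis
  proof (intro conjI allI impI ballI)
    fix e f assume ef: "f \<in> Slev \<theta> 2 \<and> e * f = f"
    hence "cmod (mtrace (\<theta> f) - 2) < 95/100" using S[of f 2] by simp
    hence "cmod (mtrace (\<theta> e) - 2) < 1/20" using P1 ef by blast
    thus "e \<in> Slev \<theta> 2" using S[of e 2] by simp
  next
    fix x y assume x: "x \<in> Slev \<theta> 1" and y: "y \<in> Slev \<theta> 1"
    obtain k where k: "k\<in>{0,1,2::complex}" "cmod (mtrace (\<theta> (x*y)) - k) < 1/20"
      using tr_class[OF sq d] by blast
    show "x * y \<in> Slev \<theta> 1 \<union> Slev \<theta> 0"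
    proof (cases "k = 2")
      case True
      have "x * (x * y) = x * y" by (simp add: mult.assoc[symmetric] idem)
      hence c2: "cmod (mtrace (\<theta> x) - 2) < 1/20" using P1[of "x*y" x] k True by simp
      have c1: "cmod (mtrace (\<theta> x) - 1) < 95/100" using x S[of x 1] by simp
      have "1 = cmod ((mtrace (\<theta> x) - 1) - (mtrace (\<theta> x) - 2))" by simp
      also have "\<dots> \<le> cmod (mtrace (\<theta> x) - 1) + cmod (mtrace (\<theta> x) - 2)" by (rule norm_triangle_ineq4)
      finally show ?thesis using c1 c2 by linarith
    next
      case False
      hence "k = 0 \<or> k = 1" using k(1) by auto
      thus ?thesis using k(2) S[of "x*y" 0] S[of "x*y" 1] by auto
    qed
  qed
qed


end
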